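(* There exists a convenient subspecies $\mathrm{Bool}_{\max}$ of $\mathrm{Bool}$ which is maximal for inclusion: for every convenient subspecies $\mathrm{Bool}_t$ and every finite set $X$, $\mathrm{Bool}_t(X)\subseteq\mathrm{Bool}_{\max}(X)$.
   Context: A boolean function on a finite set $X$ is a map $f:\mathcal{P}(X)\to\mathbb{Z}$ with $f(\emptyset)=0$; $\mathrm{Bool}(X)$ is their set; $f_{\mid Y}$ is the restriction to $\mathcal{P}(Y)$. For disjoint $X,Y$, $(f\star_1g)(A)=f(A\cap X)+g(A\cap Y)$ (associative, commutative, unit $1\in\mathrm{Bool}(\emptyset)$). For nonempty $X$, $f$ is indecomposable if $f=f'\star_1f''$ with $f'\in\mathrm{Bool}(X\setminus Y)$, $f''\in\mathrm{Bool}(Y)$ forces $Y\in\{\emptyset,X\}$. Each $f$ determines a unique equivalence $\sim_f^i$ with $f=\prod^{\star_1}_{Y\in X/\sim_f^i}f_{\mid Y}$ and each $f_{\mid Y}$ indecomposable; $\mathrm{ic}(f)=|X/\sim_f^i|$. For an equivalence $\sim$ on $X$: $\mathrm{cl}(\sim)=|X/{\sim}|$, $\varpi_\sim$ the canonical surjection, $f/{\sim}(A)=f(\varpi_\sim^{-1}(A))$, $(f\mid\sim)(A)=\sum_{Y\in X/\sim}f(A\cap Y)$. $\mathcal{E}^W(f)=\{\sim:\mathrm{ic}(f\mid\sim)=\mathrm{cl}(\sim)\}$ and $\mathcal{E}^S(f)=\{\sim\in\mathcal{E}^W(f):\mathrm{ic}(f/{\sim})=\mathrm{ic}(f)\}$.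 A convenient subspecies is an assignment $X\mapsto\mathrm{Bool}_t(X)\subseteq\mathrm{Bool}(X)$, stable under bijections ($f\mapsto f\circ\sigma^{-1}$), such that: $1\in\mathrm{Bool}_t(\emptyset)$; $f\star_1g\in\mathrm{Bool}_t(X\sqcup Y)$ for $f\in\mathrm{Bool}_t(X)$, $g\in\mathrm{Bool}_t(Y)$; $f_{\mid Y}\in\mathrm{Bool}_t(Y)$ for $f\in\mathrm{Bool}_t(X)$, $Y\subseteq X$; $f/{\sim}\in\mathrm{Bool}_t(X/{\sim})$ for $f\in\mathrm{Bool}_t(X)$, $\sim\in\mathcal{E}^W(f)$; and $\mathcal{E}^W(f)=\mathcal{E}^S(f)$ for all $f\in\mathrm{Bool}_t(X)$. *)

theory Defs
  imports Main "HOL-Library.Nat_Bijection"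
begin

text \<open>A boolean function
on X is represented by a function nat set => int that vanishes on the empty set and outside Pow X
(extensional convention).\<close>

type_synonym bfun = "nat set \<Rightarrow> int"

definition Bool :: "nat set \<Rightarrow> bfun set" where
  "Bool X = {f. f {} = 0 \<and> (\<forall>A. \<not> A \<subseteq> X \<longrightarrow> f A = 0)}"

definition restr :: "bfun \<Rightarrow> nat set \<Rightarrow> bfun" where
  "restr f Y = (\<lambda>A. if A \<subseteq> Y then f A else 0)"

definition star1 :: "nat set \<Rightarrow> bfun \<Rightarrow> nat set \<Rightarrow> bfun \<Rightarrow> bfun" where
  "star1 X f Y g = (\<lambda>A. if A \<subseteq> X \<union> Y then f (A \<inter> X) + g (A \<inter> Y) else 0)"

definition transport :: "nat set \<Rightarrow> (nat \<Rightarrow> nat) \<Rightarrow> nat set \<Rightarrow> bfun \<Rightarrow> bfun" where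
  "transport X \<sigma> Y f = (\<lambda>B. if B \<subseteq> Y then f {x \<in> X. \<sigma> x \<in> B} else 0)"

definition indecomposable :: "nat set \<Rightarrow> bfun \<Rightarrow> bool" where
  "indecomposable X f \<longleftrightarrow> X \<noteq> {} \<and>
     (\<forall>Y \<subseteq> X. (\<exists>f' \<in> Bool (X - Y). \<exists>f'' \<in> Bool Y. f = star1 (X - Y) f' Y f'')
        \<longrightarrow> Y = {} \<or> Y = X)"

definition ic_rel :: "nat set \<Rightarrow> bfun \<Rightarrow> (nat \<times> nat) set" where
  "ic_rel X f = (THE r. equiv X r \<and> (\<forall>A \<subseteq> X. f A = (\<Sum>Y \<in> X // r. f (A \<inter> Y)))
                    \<and> (\<forall>Y \<in> X // r. indecomposable Y (restr f Y)))"

definition ic :: "nat set \<Rightarrow> bfun \<Rightarrow> nat" where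
  "ic X f = card (X // ic_rel X f)"

definition cl :: "nat set \<Rightarrow> (nat \<times> nat) set \<Rightarrow> nat" where
  "cl X r = card (X // r)"

text \<open>The quotient set X/~, realised inside the universe nat via the canonical injective
encoding of finite sets of naturals (set_encode); varpi is the canonical surjection.\<close>
definition qset :: "nat set \<Rightarrow> (nat \<times> nat) set \<Rightarrow> nat set" where
  "qset X r = set_encode ` (X // r)"

definition varpi :: "(nat \<times> nat) set \<Rightarrow> nat \<Rightarrow> nat" where
  "varpi r x = set_encode (r `` {x})"

definition quot :: "nat set \<Rightarrow> bfun \<Rightarrow> (nat \<times> nat) set \<Rightarrow> bfun" where
  "quot X f r = (\<lambda>A. if A \<subseteq> qset X r then f {x \<in> X. varpi r x \<in> A} else 0)"

definition blockprod :: "nat set \<Rightarrow> bfun \<Rightarrow> (nat \<times> nat) set \<Rightarrow> bfun" where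
  "blockprod X f r = (\<lambda>A. if A \<subseteq> X then (\<Sum>Y \<in> X // r. f (A \<inter> Y)) else 0)"

definition EW :: "nat set \<Rightarrow> bfun \<Rightarrow> (nat \<times> nat) set set" where
  "EW X f = {r. equiv X r \<and> ic X (blockprod X f r) = cl X r}"

definition ES :: "nat set \<Rightarrow> bfun \<Rightarrow> (nat \<times> nat) set set" where
  "ES X f = {r \<in> EW X f. ic (qset X r) (quot X f r) = ic X f}"

definition convenient :: "(nat set \<Rightarrow> bfun set) \<Rightarrow> bool" where
  "convenient B \<longleftrightarrow>
     (\<forall>X. finite X \<longrightarrow> B X \<subseteq> Bool X) \<and>
     (\<forall>X Y \<sigma> f. finite X \<longrightarrow> bij_betw \<sigma> X Y \<longrightarrow> f \<in> B X \<longrightarrow> transport X \<sigma> Y f \<in> B Y) \<and>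
     (\<lambda>_. 0) \<in> B {} \<and>
     (\<forall>X Y f g. finite X \<longrightarrow> finite Y \<longrightarrow> X \<inter> Y = {} \<longrightarrow> f \<in> B X \<longrightarrow> g \<in> B Y
        \<longrightarrow> star1 X f Y g \<in> B (X \<union> Y)) \<and>
     (\<forall>X Y f. finite X \<longrightarrow> Y \<subseteq> X \<longrightarrow> f \<in> B X \<longrightarrow> restr f Y \<in> B Y) \<and>
     (\<forall>X f r. finite X \<longrightarrow> f \<in> B X \<longrightarrow> r \<in> EW X f \<longrightarrow> quot X f r \<in> B (qset X r)) \<and>
     (\<forall>X f. finite X \<longrightarrow> f \<in> B X \<longrightarrow> EW X f = ES X f)"

end

theory Submission
  imports Defs
begin


definition sep :: "nat set \<Rightarrow> bfun \<Rightarrow> nat set \<Rightarrow> bool" where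
  "sep X g Z \<longleftrightarrow> (\<forall>A. A \<subseteq> X \<longrightarrow> g A = g (A \<inter> Z) + g (A - Z))"

definition R0 :: "nat set \<Rightarrow> bfun \<Rightarrow> (nat \<times> nat) set" where
  "R0 X g = {(x,y). x \<in> X \<and> y \<in> X \<and> (\<forall>Z. Z \<subseteq> X \<longrightarrow> sep X g Z \<longrightarrow> (x \<in> Z \<longleftrightarrow> y \<in> Z))}"

definition dec :: "nat set \<Rightarrow> bfun \<Rightarrow> (nat \<times> nat) set \<Rightarrow> bool" where
  "dec X g r \<longleftrightarrow> (\<forall>A. A \<subseteq> X \<longrightarrow> g A = (\<Sum>Y\<in>X//r. g (A \<inter> Y)))"

definition icP :: "nat set \<Rightarrow> bfun \<Rightarrow> (nat \<times> nat) set \<Rightarrow> bool" where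
  "icP X g r \<longleftrightarrow> equiv X r \<and> dec X g r \<and> (\<forall>Y\<in>X//r. indecomposable Y (restr g Y))"

lemma ic_rel_icP: "ic_rel X g = (THE r. icP X g r)"
  unfolding ic_rel_def icP_def dec_def by simp

lemma sep_X: "g {} = 0 \<Longrightarrow> sep X g X"
  unfolding sep_def
proof (intro allI impI)
  fix A assume g0: "g {} = 0" and A: "A \<subseteq> X"
  have e: "A \<inter> X = A" "A - X = {}" using A by auto
  show "g A = g (A \<inter> X) + g (A - X)" by (simp add: e g0)
qed

lemma sep_compl: assumes "sep X g Z" shows "sep X g (X - Z)"
  unfolding sep_def
proof (intro allI impI)
  fix A assume A: "A \<subseteq> X"
  have "A \<inter> (X - Z) = A - Z" "A - (X - Z) = A \<inter> Z" using A by auto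
  then show "g A = g (A \<inter> (X - Z)) + g (A - (X - Z))" using assms A unfolding sep_def by simp
qed

lemma sep_Int: assumes 1: "sep X g Z1" and 2: "sep X g Z2" shows "sep X g (Z1 \<inter> Z2)"
  unfolding sep_def
proof (intro allI impI)
  fix A assume A: "A \<subseteq> X"
  have a: "g A = g (A \<inter> Z2) + g (A - Z2)" using 2 A unfolding sep_def by blast
  have b: "g (A \<inter> Z2) = g (A \<inter> Z2 \<inter> Z1) + g (A \<inter> Z2 - Z1)" using 1 A unfolding sep_def by blast
  have c: "g (A - Z1 \<inter> Z2) = g ((A - Z1 \<inter> Z2) \<inter> Z2) + g ((A - Z1 \<inter> Z2) - Z2)"
    using 2 A unfolding sep_def by blast
  have d: "(A - Z1 \<inter> Z2) \<inter> Z2 = A \<inter> Z2 - Z1" "(A - Z1 \<inter> Z2) - Z2 = A - Z2"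
    "A \<inter> Z2 \<inter> Z1 = A \<inter> (Z1 \<inter> Z2)" by auto
  show "g A = g (A \<inter> (Z1 \<inter> Z2)) + g (A - Z1 \<inter> Z2)" using a b c d by simp
qed

lemma sep_Inter: assumes "finite F" "\<forall>Z\<in>F. sep X g Z" "g {} = 0" shows "sep X g (X \<inter> \<Inter>F)"
  using assms
proof (induction F rule: finite_induct)
  case empty then show ?case using sep_X[of g X] by simp
next
  case (insert Z F)
  have "X \<inter> \<Inter>(insert Z F) = Z \<inter> (X \<inter> \<Inter>F)" by auto
  then show ?case using insert sep_Int by auto
qed

lemma R0_D: assumes "(x, y) \<in> R0 X g" "Z \<subseteq> X" "sep X g Z" shows "x \<in> Z \<longleftrightarrow> y \<in> Z"
proof -
  have "\<forall>Z. Z \<subseteq> X \<longrightarrow> sep X g Z \<longrightarrow> (x \<in> Z \<longleftrightarrow> y \<in> Z)" using assms(1) unfolding R0_def by simp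
  then have "Z \<subseteq> X \<longrightarrow> sep X g Z \<longrightarrow> (x \<in> Z \<longleftrightarrow> y \<in> Z)" by (rule spec)
  then show ?thesis using assms(2,3) by simp
qed

lemma R0_in: "(x, y) \<in> R0 X g \<Longrightarrow> x \<in> X \<and> y \<in> X"
  unfolding R0_def by simp

lemma R0_class: assumes "x \<in> X"
  shows "R0 X g `` {x} = X \<inter> \<Inter>{Z. Z \<subseteq> X \<and> sep X g Z \<and> x \<in> Z}"
proof
  show "R0 X g `` {x} \<subseteq> X \<inter> \<Inter>{Z. Z \<subseteq> X \<and> sep X g Z \<and> x \<in> Z}"
  proof
    fix y assume "y \<in> R0 X g `` {x}"
    then have xy: "(x, y) \<in> R0 X g" by simp
    show "y \<in> X \<inter> \<Inter>{Z. Z \<subseteq> X \<and> sep X g Z \<and> x \<in> Z}"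
      using R0_in[OF xy] R0_D[OF xy] by blast
  qed
next
  show "X \<inter> \<Inter>{Z. Z \<subseteq> X \<and> sep X g Z \<and> x \<in> Z} \<subseteq> R0 X g `` {x}"
  proof
    fix y assume y: "y \<in> X \<inter> \<Inter>{Z. Z \<subseteq> X \<and> sep X g Z \<and> x \<in> Z}"
    have "\<forall>Z. Z \<subseteq> X \<longrightarrow> sep X g Z \<longrightarrow> (x \<in> Z \<longleftrightarrow> y \<in> Z)"
    proof (intro allI impI)
      fix Z assume Z: "Z \<subseteq> X" "sep X g Z"
      show "x \<in> Z \<longleftrightarrow> y \<in> Z"
      proof
        assume "x \<in> Z" then show "y \<in> Z" using y Z by auto
      next
        assume yZ: "y \<in> Z"
        show "x \<in> Z"
        proof (rule ccontr)
          assume "x \<notin> Z"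
          then have "X - Z \<subseteq> X \<and> sep X g (X - Z) \<and> x \<in> X - Z" using Z sep_compl assms by auto
          then have "y \<in> X - Z" using y by blast
          then show False using yZ by auto
        qed
      qed
    qed
    then have "(x, y) \<in> R0 X g" using y assms unfolding R0_def by simp
    then show "y \<in> R0 X g `` {x}" by simp
  qed
qed

lemma R0_class_sep: assumes "x \<in> X" "finite X" "g {} = 0" shows "sep X g (R0 X g `` {x})"
proof -
  have "{Z. Z \<subseteq> X \<and> sep X g Z \<and> x \<in> Z} \<subseteq> Pow X" by auto
  then have "finite {Z. Z \<subseteq> X \<and> sep X g Z \<and> x \<in> Z}" using assms(2) finite_subset by blast
  then show ?thesis unfolding R0_class[OF assms(1)] using sep_Inter assms(3) by blast
qed

lemma equiv_R0: "equiv X (R0 X g)"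
proof (rule equivI)
  show "R0 X g \<subseteq> X \<times> X" using R0_in by auto
  show "refl_on X (R0 X g)" unfolding refl_on_def R0_def using R0_in by auto
  show "sym (R0 X g)" unfolding sym_def
  proof (intro allI impI)
    fix x y assume xy: "(x, y) \<in> R0 X g"
    have "\<forall>Z. Z \<subseteq> X \<longrightarrow> sep X g Z \<longrightarrow> (y \<in> Z \<longleftrightarrow> x \<in> Z)" using R0_D[OF xy] by blast
    then show "(y, x) \<in> R0 X g" using R0_in[OF xy] unfolding R0_def by simp
  qed
  show "trans (R0 X g)" unfolding trans_def
  proof (intro allI impI)
    fix x y z assume xy: "(x, y) \<in> R0 X g" and yz: "(y, z) \<in> R0 X g"
    have "\<forall>Z. Z \<subseteq> X \<longrightarrow> sep X g Z \<longrightarrow> (x \<in> Z \<longleftrightarrow> z \<in> Z)" using R0_D[OF xy] R0_D[OF yz] by blast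
    then show "(x, z) \<in> R0 X g" using R0_in[OF xy] R0_in[OF yz] unfolding R0_def by simp
  qed
qed

lemma sep_union_sum:
  assumes "finite P" "\<forall>Y\<in>P. sep X g Y" "\<forall>Y\<in>P. \<forall>Y'\<in>P. Y \<noteq> Y' \<longrightarrow> Y \<inter> Y' = {}" "A \<subseteq> X" "g {} = 0"
  shows "g (A \<inter> \<Union>P) = (\<Sum>Y\<in>P. g (A \<inter> Y))"
  using assms
proof (induction P rule: finite_induct)
  case empty then show ?case by simp
next
  case (insert Y P)
  have s: "sep X g Y" using insert.prems(1) by simp
  have d: "Y \<inter> \<Union>P = {}"
  proof -
    have "Y \<inter> Y' = {}" if Y': "Y' \<in> P" for Y'
    proof -
      have "Y \<noteq> Y'" using insert.hyps(2) Y' by auto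
      then show ?thesis using insert.prems(2) Y' by simp
    qed
    then show ?thesis by auto
  qed
  have IH: "g (A \<inter> \<Union>P) = (\<Sum>Y\<in>P. g (A \<inter> Y))"
  proof (rule insert.IH)
    show "\<forall>Y\<in>P. sep X g Y" using insert.prems(1) by simp
    show "\<forall>Y\<in>P. \<forall>Y'\<in>P. Y \<noteq> Y' \<longrightarrow> Y \<inter> Y' = {}" using insert.prems(2) by simp
  qed (use insert.prems in simp_all)
  have "A \<inter> \<Union>(insert Y P) \<subseteq> X" using insert.prems(3) by blast
  then have "g (A \<inter> \<Union>(insert Y P)) = g ((A \<inter> \<Union>(insert Y P)) \<inter> Y) + g (A \<inter> \<Union>(insert Y P) - Y)"
    using s unfolding sep_def by blast
  moreover have "(A \<inter> \<Union>(insert Y P)) \<inter> Y = A \<inter> Y" by auto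
  moreover have "A \<inter> \<Union>(insert Y P) - Y = A \<inter> \<Union>P" using d by auto
  moreover have "(\<Sum>Y\<in>insert Y P. g (A \<inter> Y)) = g (A \<inter> Y) + (\<Sum>Y\<in>P. g (A \<inter> Y))"
    using insert.hyps by simp
  ultimately show ?case using IH by simp
qed

lemma seps_dec:
  assumes "equiv X r" "finite X" "\<forall>Y\<in>X//r. sep X g Y" "g {} = 0"
  shows "dec X g r"
  unfolding dec_def
proof (intro allI impI)
  fix A assume A: "A \<subseteq> X"
  have fin: "finite (X//r)" using assms(1,2) finite_quotient equiv_type by blast
  have disj: "\<forall>Y\<in>X//r. \<forall>Y'\<in>X//r. Y \<noteq> Y' \<longrightarrow> Y \<inter> Y' = {}"
  proof (intro ballI impI)
    fix Y Y' assume "Y \<in> X//r" "Y' \<in> X//r" "Y \<noteq> Y'"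
    then show "Y \<inter> Y' = {}" using quotient_disj[OF assms(1), of Y Y'] by simp
  qed
  have "g (A \<inter> \<Union>(X//r)) = (\<Sum>Y\<in>X//r. g (A \<inter> Y))"
    by (rule sep_union_sum[OF fin assms(3) disj A assms(4)])
  then show "g A = (\<Sum>Y\<in>X//r. g (A \<inter> Y))" using Union_quotient[OF assms(1)] A by (simp add: Int_absorb2)
qed

lemma dec_sep:
  assumes "equiv X r" "finite X" "dec X g r" "Z \<in> X//r" "g {} = 0"
  shows "sep X g Z"
  unfolding sep_def
proof (intro allI impI)
  fix A assume A: "A \<subseteq> X"
  have fin: "finite (X//r)" using assms(1,2) finite_quotient equiv_type by blast
  have "g A = (\<Sum>Y\<in>X//r. g (A \<inter> Y))" using assms(3) A unfolding dec_def by blast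
  then have 1: "g A = g (A \<inter> Z) + (\<Sum>Y\<in>X//r - {Z}. g (A \<inter> Y))"
    using sum.remove[OF fin assms(4)] by simp
  have "A - Z \<subseteq> X" using A by auto
  then have "g (A - Z) = (\<Sum>Y\<in>X//r. g ((A - Z) \<inter> Y))" using assms(3) unfolding dec_def by blast
  then have 2: "g (A - Z) = g ((A - Z) \<inter> Z) + (\<Sum>Y\<in>X//r - {Z}. g ((A - Z) \<inter> Y))"
    using sum.remove[OF fin assms(4)] by simp
  have 3: "(\<Sum>Y\<in>X//r - {Z}. g ((A - Z) \<inter> Y)) = (\<Sum>Y\<in>X//r - {Z}. g (A \<inter> Y))"
  proof (rule sum.cong)
    fix Y assume "Y \<in> X//r - {Z}"
    then have "Y \<inter> Z = {}" using quotient_disj[OF assms(1) _ assms(4), of Y] by simp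
    then have "(A - Z) \<inter> Y = A \<inter> Y" by auto
    then show "g ((A - Z) \<inter> Y) = g (A \<inter> Y)" by simp
  qed simp
  have "(A - Z) \<inter> Z = {}" by auto
  then show "g A = g (A \<inter> Z) + g (A - Z)" using 1 2 3 assms(5) by simp
qed

lemma restr_Bool: "g {} = 0 \<Longrightarrow> restr g Y \<in> Bool Y"
  unfolding Bool_def restr_def by auto

lemma restr_split:
  assumes "sep X g W" "W \<subseteq> Y" "Y \<subseteq> X"
  shows "restr g Y = star1 (Y - W) (restr g (Y - W)) W (restr g W)"
proof
  fix B
  show "restr g Y B = star1 (Y - W) (restr g (Y - W)) W (restr g W) B"
  proof (cases "B \<subseteq> Y")
    case True
    then have "g B = g (B \<inter> W) + g (B - W)" using assms unfolding sep_def by blast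
    moreover have "B \<inter> (Y - W) = B - W" using True by auto
    moreover have "(Y - W) \<union> W = Y" using assms by auto
    ultimately show ?thesis using True unfolding restr_def star1_def by auto
  next
    case False
    moreover have "(Y - W) \<union> W = Y" using assms by auto
    ultimately show ?thesis unfolding restr_def star1_def by auto
  qed
qed



lemma Bool_empty: "g \<in> Bool X \<Longrightarrow> g {} = 0" unfolding Bool_def by auto

lemma star_decomp_sep:
  assumes sY: "sep X g Y" and YX: "Y \<subseteq> X" and WY: "W \<subseteq> Y"
    and f1: "f' \<in> Bool (Y - W)" and f2: "f'' \<in> Bool W"
    and eq: "restr g Y = star1 (Y - W) f' W f''"
  shows "sep X g W"
  unfolding sep_def
proof (intro allI impI)
  fix A assume A: "A \<subseteq> X"
  have U: "(Y - W) \<union> W = Y" using WY by auto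
  have e1: "f' B = g B" if B: "B \<subseteq> Y - W" for B
  proof -
    have "restr g Y B = g B" using B unfolding restr_def by auto
    moreover have "star1 (Y - W) f' W f'' B = f' (B \<inter> (Y - W)) + f'' (B \<inter> W)"
      using B U unfolding star1_def by auto
    moreover have "B \<inter> (Y - W) = B" "B \<inter> W = {}" using B by auto
    ultimately have "g B = f' B + f'' {}" using eq by simp
    then show ?thesis using f2 Bool_empty by simp
  qed
  have e2: "f'' B = g B" if B: "B \<subseteq> W" for B
  proof -
    have "restr g Y B = g B" using B WY unfolding restr_def by auto
    moreover have "star1 (Y - W) f' W f'' B = f' (B \<inter> (Y - W)) + f'' (B \<inter> W)"
      using B U unfolding star1_def by auto
    moreover have "B \<inter> (Y - W) = {}" "B \<inter> W = B" using B by auto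
    ultimately have "g B = f' {} + f'' B" using eq by simp
    then show ?thesis using f1 Bool_empty by simp
  qed
  have "g (A \<inter> Y) = restr g Y (A \<inter> Y)" unfolding restr_def by auto
  also have "\<dots> = f' (A \<inter> Y \<inter> (Y - W)) + f'' (A \<inter> Y \<inter> W)"
    using eq U unfolding star1_def by auto
  also have "\<dots> = g (A \<inter> (Y - W)) + g (A \<inter> W)"
  proof -
    have "A \<inter> Y \<inter> (Y - W) = A \<inter> (Y - W)" "A \<inter> Y \<inter> W = A \<inter> W" using WY by auto
    then show ?thesis using e1 e2 by auto
  qed
  finally have a: "g (A \<inter> Y) = g (A \<inter> (Y - W)) + g (A \<inter> W)" .
  have b: "g A = g (A \<inter> Y) + g (A - Y)" using sY A unfolding sep_def by blast
  have "A - W \<subseteq> X" using A by auto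
  then have c: "g (A - W) = g ((A - W) \<inter> Y) + g (A - W - Y)" using sY unfolding sep_def by blast
  have d: "(A - W) \<inter> Y = A \<inter> (Y - W)" "A - W - Y = A - Y" using WY by auto
  show "g A = g (A \<inter> W) + g (A - W)" using a b c d by simp
qed

lemma R0_icP: assumes fin: "finite X" and gB: "g \<in> Bool X" shows "icP X g (R0 X g)"
proof -
  have g0: "g {} = 0" using gB Bool_empty by blast
  have eq: "equiv X (R0 X g)" by (rule equiv_R0)
  have seps: "\<forall>Y\<in>X//R0 X g. sep X g Y"
  proof
    fix Y assume "Y \<in> X//R0 X g"
    then obtain x where "x \<in> X" "Y = R0 X g `` {x}" by (rule quotientE)
    then show "sep X g Y" using R0_class_sep[of x X g] fin g0 by simp
  qed
  have dec: "dec X g (R0 X g)" using seps_dec[OF eq fin seps g0] .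
  have ind: "indecomposable Y (restr g Y)" if Y: "Y \<in> X//R0 X g" for Y
  proof -
    obtain x where x: "x \<in> X" "Y = R0 X g `` {x}" using Y by (rule quotientE)
    have xY: "x \<in> Y" using x equiv_class_self[OF eq] by auto
    have sY: "sep X g Y" using seps Y by auto
    have YX: "Y \<subseteq> X" using x R0_in by blast
    show ?thesis unfolding indecomposable_def
    proof (intro conjI allI impI)
      show "Y \<noteq> {}" using xY by auto
    next
      fix W assume WY: "W \<subseteq> Y"
        and ex: "\<exists>f'\<in>Bool (Y - W). \<exists>f''\<in>Bool W. restr g Y = star1 (Y - W) f' W f''"
      then have sW: "sep X g W" using star_decomp_sep[OF sY YX WY] by blast
      show "W = {} \<or> W = Y"
      proof (cases "W = {}")
        case False
        then obtain w where w: "w \<in> W" by auto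
        have "Y \<subseteq> W"
        proof
          fix y assume y: "y \<in> Y"
          have "(x, w) \<in> R0 X g" "(x, y) \<in> R0 X g" using w WY y x by auto
          moreover have WX: "W \<subseteq> X" using WY YX by blast
          ultimately have "x \<in> W \<longleftrightarrow> w \<in> W" "x \<in> W \<longleftrightarrow> y \<in> W"
            using R0_D[OF _ WX sW] by blast+
          then show "y \<in> W" using w by auto
        qed
        then show ?thesis using WY by auto
      qed simp
    qed
  qed
  show ?thesis unfolding icP_def using eq dec ind by blast
qed

lemma dec_R0_sub:
  assumes fin: "finite X" and gB: "g \<in> Bool X" and eq: "equiv X r" and dec: "dec X g r"
  shows "R0 X g \<subseteq> r"
proof
  fix p assume p: "p \<in> R0 X g"
  obtain x y where xy: "p = (x, y)" by (cases p)
  have x: "x \<in> X" "y \<in> X" using p xy R0_in by auto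
  have Yq: "r `` {x} \<in> X//r" by (rule quotientI[OF x(1)])
  have "sep X g (r `` {x})" using dec_sep[OF eq fin dec Yq] gB Bool_empty by blast
  moreover have "r `` {x} \<subseteq> X" using eq unfolding equiv_def refl_on_def by auto
  moreover have "x \<in> r `` {x}" using equiv_class_self[OF eq x(1)] .
  ultimately have "y \<in> r `` {x}" using p xy R0_D by blast
  then show "p \<in> r" using xy by auto
qed

lemma icP_unique:
  assumes fin: "finite X" and gB: "g \<in> Bool X" and P: "icP X g r"
  shows "r = R0 X g"
proof
  have eq: "equiv X r" and dec: "dec X g r" and ind: "\<forall>Y\<in>X//r. indecomposable Y (restr g Y)"
    using P unfolding icP_def by auto
  have g0: "g {} = 0" using gB Bool_empty by blast
  show "R0 X g \<subseteq> r" using dec_R0_sub[OF fin gB eq dec] .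
  show "r \<subseteq> R0 X g"
  proof
    fix p assume p: "p \<in> r"
    obtain x y where xy: "p = (x, y)" by (cases p)
    have x: "x \<in> X" "y \<in> X" using p xy eq unfolding equiv_def refl_on_def by auto
    define Y where "Y = r `` {x}"
    have Yq: "Y \<in> X//r" unfolding Y_def by (rule quotientI[OF x(1)])
    have sY: "sep X g Y" using dec_sep[OF eq fin dec Yq g0] .
    have YX: "Y \<subseteq> X" using eq unfolding equiv_def refl_on_def Y_def by auto
    have xyY: "x \<in> Y" "y \<in> Y" using equiv_class_self[OF eq x(1)] p xy Y_def by auto
    have "x \<in> Z \<longleftrightarrow> y \<in> Z" if Z: "Z \<subseteq> X" "sep X g Z" for Z
    proof -
      have sW: "sep X g (Y \<inter> Z)" using sep_Int[OF sY Z(2)] .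
      have "restr g Y = star1 (Y - Y \<inter> Z) (restr g (Y - Y \<inter> Z)) (Y \<inter> Z) (restr g (Y \<inter> Z))"
        using restr_split[OF sW _ YX] by auto
      moreover have "restr g (Y - Y \<inter> Z) \<in> Bool (Y - Y \<inter> Z)" "restr g (Y \<inter> Z) \<in> Bool (Y \<inter> Z)"
        using restr_Bool g0 by auto
      moreover have "indecomposable Y (restr g Y)" using ind Yq by auto
      ultimately have "Y \<inter> Z = {} \<or> Y \<inter> Z = Y" unfolding indecomposable_def by blast
      then show ?thesis using xyY by auto
    qed
    then show "p \<in> R0 X g" using xy x unfolding R0_def by simp
  qed
qed

lemma ic_rel_R0: "finite X \<Longrightarrow> g \<in> Bool X \<Longrightarrow> ic_rel X g = R0 X g"
  unfolding ic_rel_icP by (rule the_equality) (simp_all add: R0_icP icP_unique)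

lemma ic_card: "finite X \<Longrightarrow> g \<in> Bool X \<Longrightarrow> ic X g = card (X // R0 X g)"
  unfolding ic_def by (simp add: ic_rel_R0)

lemma refine_eq:
  assumes fin: "finite X" and eR: "equiv X R" and eS: "equiv X S" and sub: "R \<subseteq> S"
    and c: "card (X//S) = card (X//R)"
  shows "S = R"
proof -
  define F where "F = (\<lambda>C. S `` C)"
  have im: "F ` (X//R) = X//S" unfolding F_def using refines_equiv_image_eq[OF sub eR eS] .
  have finR: "finite (X//R)" using fin eR finite_quotient equiv_type by blast
  have "card (F ` (X//R)) = card (X//R)" using im c by simp
  then have inj: "inj_on F (X//R)" by (rule eq_card_imp_inj_on[OF finR])
  have "S \<subseteq> R"
  proof
    fix p assume p: "p \<in> S"
    obtain x y where xy: "p = (x, y)" by (cases p)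
    have x: "x \<in> X" "y \<in> X" using p xy eS unfolding equiv_def refl_on_def by auto
    have "F (R `` {x}) = F (R `` {y})"
      unfolding F_def using refines_equiv_class_eq2[OF sub eR eS] eq_equiv_class_iff[OF eS x] p xy by simp
    then have "R `` {x} = R `` {y}" using inj_onD[OF inj _ quotientI[OF x(1)] quotientI[OF x(2)]] by simp
    then show "p \<in> R" using eq_equiv_class_iff[OF eR x] xy by simp
  qed
  then show ?thesis using sub by auto
qed

lemma cl_le_ic:
  assumes "finite X" "g \<in> Bool X" "equiv X r" "dec X g r"
  shows "cl X r \<le> ic X g"
proof -
  have f: "finite (X // R0 X g)" using assms(1) equiv_R0 finite_quotient equiv_type by blast
  have "card (X//r) \<le> card (X // R0 X g)"
    by (rule finite_refines_card_le[OF f dec_R0_sub[OF assms] equiv_R0 assms(3)])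
  then show ?thesis unfolding cl_def ic_card[OF assms(1,2)] .
qed

lemma cl_eq_ic:
  assumes "finite X" "g \<in> Bool X" "equiv X r" "dec X g r" "cl X r = ic X g"
  shows "r = R0 X g"
proof (rule refine_eq[OF assms(1) equiv_R0 assms(3) dec_R0_sub[OF assms(1-4)]])
  show "card (X // r) = card (X // R0 X g)" using assms(5) unfolding cl_def ic_card[OF assms(1,2)] .
qed



lemma star_val: "B \<subseteq> X1 \<union> X2 \<Longrightarrow> star1 X1 f1 X2 f2 B = f1 (B \<inter> X1) + f2 (B \<inter> X2)"
  unfolding star1_def by simp

lemma star_left:
  assumes "X1 \<inter> X2 = {}" "f2 {} = 0" "B \<subseteq> X1"
  shows "star1 X1 f1 X2 f2 B = f1 B"
proof -
  have "B \<inter> X1 = B" "B \<inter> X2 = {}" using assms by auto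
  moreover have "B \<subseteq> X1 \<union> X2" using assms by auto
  ultimately show ?thesis using star_val[of B X1 X2 f1 f2] assms(2) by simp
qed

lemma star_right:
  assumes "X1 \<inter> X2 = {}" "f1 {} = 0" "B \<subseteq> X2"
  shows "star1 X1 f1 X2 f2 B = f2 B"
proof -
  have "B \<inter> X2 = B" "B \<inter> X1 = {}" using assms by auto
  moreover have "B \<subseteq> X1 \<union> X2" using assms by auto
  ultimately show ?thesis using star_val[of B X1 X2 f1 f2] assms(2) by simp
qed

lemma star_Bool: "f1 \<in> Bool X1 \<Longrightarrow> f2 \<in> Bool X2 \<Longrightarrow> star1 X1 f1 X2 f2 \<in> Bool (X1 \<union> X2)"
  unfolding Bool_def star1_def by auto

lemma quot_sub: "equiv X r \<Longrightarrow> Y \<in> X//r \<Longrightarrow> Y \<subseteq> X"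
  using Union_quotient by blast

lemma class_union1:
  assumes "equiv X2 r2" "X1 \<inter> X2 = {}" "x \<in> X1"
  shows "(r1 \<union> r2) `` {x} = r1 `` {x}"
proof -
  have "r2 `` {x} = {}" using equiv_type[OF assms(1)] assms(2,3) by blast
  then show ?thesis by (simp add: Un_Image)
qed

lemma class_union2:
  assumes "equiv X1 r1" "X1 \<inter> X2 = {}" "x \<in> X2"
  shows "(r1 \<union> r2) `` {x} = r2 `` {x}"
proof -
  have "r1 `` {x} = {}" using equiv_type[OF assms(1)] assms(2,3) by blast
  then show ?thesis by (simp add: Un_Image)
qed

lemma equiv_union:
  assumes e1: "equiv X1 r1" and e2: "equiv X2 r2" and d: "X1 \<inter> X2 = {}"
  shows "equiv (X1 \<union> X2) (r1 \<union> r2)"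
proof (rule equivI)
  have t1: "r1 \<subseteq> X1 \<times> X1" and t2: "r2 \<subseteq> X2 \<times> X2" using e1 e2 equiv_type by blast+
  then show "r1 \<union> r2 \<subseteq> (X1 \<union> X2) \<times> (X1 \<union> X2)" by blast
  show "refl_on (X1 \<union> X2) (r1 \<union> r2)"
    using e1 e2 t1 t2 unfolding equiv_def refl_on_def by blast
  show "sym (r1 \<union> r2)" using e1 e2 unfolding equiv_def by (simp add: sym_Un)
  show "trans (r1 \<union> r2)" unfolding trans_def
  proof (intro allI impI)
    fix x y z assume xy: "(x, y) \<in> r1 \<union> r2" and yz: "(y, z) \<in> r1 \<union> r2"
    show "(x, z) \<in> r1 \<union> r2"
    proof (cases "(x, y) \<in> r1")
      case True
      then have "y \<in> X1" using t1 by blast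
      then have "(y, z) \<in> r1" using yz t2 d by blast
      then show ?thesis using True e1 unfolding equiv_def trans_def by blast
    next
      case False
      then have xy2: "(x, y) \<in> r2" using xy by blast
      then have "y \<in> X2" using t2 by blast
      then have "(y, z) \<in> r2" using yz t1 d by blast
      then show ?thesis using xy2 e2 unfolding equiv_def trans_def by blast
    qed
  qed
qed

lemma quotient_union:
  assumes e1: "equiv X1 r1" and e2: "equiv X2 r2" and d: "X1 \<inter> X2 = {}"
  shows "(X1 \<union> X2) // (r1 \<union> r2) = X1//r1 \<union> X2//r2"
proof -
  have "(X1 \<union> X2) // (r1 \<union> r2) = (\<Union>x\<in>X1. {(r1 \<union> r2) `` {x}}) \<union> (\<Union>x\<in>X2. {(r1 \<union> r2) `` {x}})"
    unfolding quotient_def by (rule UN_Un)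
  also have "(\<Union>x\<in>X1. {(r1 \<union> r2) `` {x}}) = (\<Union>x\<in>X1. {r1 `` {x}})"
    using class_union1[OF e2 d] by simp
  also have "(\<Union>x\<in>X2. {(r1 \<union> r2) `` {x}}) = (\<Union>x\<in>X2. {r2 `` {x}})"
    using class_union2[OF e1 d] by simp
  finally show ?thesis unfolding quotient_def .
qed

lemma quotient_union_disj:
  assumes e1: "equiv X1 r1" and e2: "equiv X2 r2" and d: "X1 \<inter> X2 = {}"
  shows "X1//r1 \<inter> X2//r2 = {}"
proof (rule ccontr)
  assume "X1//r1 \<inter> X2//r2 \<noteq> {}"
  then obtain C where C1: "C \<in> X1//r1" and C2: "C \<in> X2//r2" by blast
  obtain x where x: "x \<in> X1" "C = r1 `` {x}" using C1 by (rule quotientE)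
  have "x \<in> C" using equiv_class_self[OF e1 x(1)] x(2) by simp
  moreover have "C \<subseteq> X2" using quot_sub[OF e2 C2] .
  ultimately show False using x(1) d by blast
qed

lemma card_quotient_union:
  assumes "finite X1" "finite X2" "equiv X1 r1" "equiv X2 r2" "X1 \<inter> X2 = {}"
  shows "card ((X1 \<union> X2) // (r1 \<union> r2)) = card (X1//r1) + card (X2//r2)"
proof -
  have "finite (X1//r1)" "finite (X2//r2)" using assms finite_quotient equiv_type by blast+
  then show ?thesis unfolding quotient_union[OF assms(3-5)]
    using card_Un_disjoint quotient_union_disj[OF assms(3-5)] by blast
qed

lemma sum_quotient_union:
  assumes "finite X1" "finite X2" "equiv X1 r1" "equiv X2 r2" "X1 \<inter> X2 = {}"
  shows "(\<Sum>Y\<in>(X1 \<union> X2) // (r1 \<union> r2). h Y) = (\<Sum>Y\<in>X1//r1. h Y) + (\<Sum>Y\<in>X2//r2. h Y)"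
proof -
  have "finite (X1//r1)" "finite (X2//r2)" using assms finite_quotient equiv_type by blast+
  then show ?thesis unfolding quotient_union[OF assms(3-5)]
    using sum.union_disjoint quotient_union_disj[OF assms(3-5)] by blast
qed

lemma ic_star:
  assumes fin1: "finite X1" and fin2: "finite X2" and d: "X1 \<inter> X2 = {}"
    and f1B: "f1 \<in> Bool X1" and f2B: "f2 \<in> Bool X2"
  shows "ic (X1 \<union> X2) (star1 X1 f1 X2 f2) = ic X1 f1 + ic X2 f2"
proof -
  define S where "S = star1 X1 f1 X2 f2"
  define r1 where "r1 = R0 X1 f1"
  define r2 where "r2 = R0 X2 f2"
  have z1: "f1 {} = 0" and z2: "f2 {} = 0" using f1B f2B Bool_empty by blast+
  have P1: "icP X1 f1 r1" unfolding r1_def by (rule R0_icP[OF fin1 f1B])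
  have P2: "icP X2 f2 r2" unfolding r2_def by (rule R0_icP[OF fin2 f2B])
  have e1: "equiv X1 r1" and dec1: "dec X1 f1 r1" and ind1: "\<forall>Y\<in>X1//r1. indecomposable Y (restr f1 Y)"
    using P1 unfolding icP_def by auto
  have e2: "equiv X2 r2" and dec2: "dec X2 f2 r2" and ind2: "\<forall>Y\<in>X2//r2. indecomposable Y (restr f2 Y)"
    using P2 unfolding icP_def by auto
  have fin: "finite (X1 \<union> X2)" using fin1 fin2 by simp
  have SB: "S \<in> Bool (X1 \<union> X2)" unfolding S_def by (rule star_Bool[OF f1B f2B])
  have eq: "equiv (X1 \<union> X2) (r1 \<union> r2)" by (rule equiv_union[OF e1 e2 d])
  have dec: "dec (X1 \<union> X2) S (r1 \<union> r2)"
    unfolding dec_def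
  proof (intro allI impI)
    fix A assume A: "A \<subseteq> X1 \<union> X2"
    have "S A = f1 (A \<inter> X1) + f2 (A \<inter> X2)" unfolding S_def using star_val[OF A] .
    also have "f1 (A \<inter> X1) = (\<Sum>Y\<in>X1//r1. f1 (A \<inter> X1 \<inter> Y))" using dec1 unfolding dec_def by blast
    also have "f2 (A \<inter> X2) = (\<Sum>Y\<in>X2//r2. f2 (A \<inter> X2 \<inter> Y))" using dec2 unfolding dec_def by blast
    also have "(\<Sum>Y\<in>X1//r1. f1 (A \<inter> X1 \<inter> Y)) = (\<Sum>Y\<in>X1//r1. S (A \<inter> Y))"
    proof (rule sum.cong)
      fix Y assume "Y \<in> X1//r1"
      then have Y: "Y \<subseteq> X1" using quot_sub[OF e1] by blast
      then have "A \<inter> X1 \<inter> Y = A \<inter> Y" by blast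
      moreover have "S (A \<inter> Y) = f1 (A \<inter> Y)" unfolding S_def using star_left[of X1 X2 f2 "A \<inter> Y" f1] d z2 Y by blast
      ultimately show "f1 (A \<inter> X1 \<inter> Y) = S (A \<inter> Y)" by simp
    qed simp
    also have "(\<Sum>Y\<in>X2//r2. f2 (A \<inter> X2 \<inter> Y)) = (\<Sum>Y\<in>X2//r2. S (A \<inter> Y))"
    proof (rule sum.cong)
      fix Y assume "Y \<in> X2//r2"
      then have Y: "Y \<subseteq> X2" using quot_sub[OF e2] by blast
      then have "A \<inter> X2 \<inter> Y = A \<inter> Y" by blast
      moreover have "S (A \<inter> Y) = f2 (A \<inter> Y)" unfolding S_def using star_right[of X1 X2 f1 "A \<inter> Y" f2] d z1 Y by blast
      ultimately show "f2 (A \<inter> X2 \<inter> Y) = S (A \<inter> Y)" by simp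
    qed simp
    finally show "S A = (\<Sum>Y\<in>(X1 \<union> X2) // (r1 \<union> r2). S (A \<inter> Y))"
      using sum_quotient_union[OF fin1 fin2 e1 e2 d, of "\<lambda>Y. S (A \<inter> Y)"] by simp
  qed
  have ind: "\<forall>Y\<in>(X1 \<union> X2) // (r1 \<union> r2). indecomposable Y (restr S Y)"
  proof
    fix Y assume "Y \<in> (X1 \<union> X2) // (r1 \<union> r2)"
    then have "Y \<in> X1//r1 \<or> Y \<in> X2//r2" using quotient_union[OF e1 e2 d] by blast
    then show "indecomposable Y (restr S Y)"
    proof
      assume Y1: "Y \<in> X1//r1"
      then have Y: "Y \<subseteq> X1" using quot_sub[OF e1] by blast
      have "restr S Y = restr f1 Y"
      proof
        fix B show "restr S Y B = restr f1 Y B"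
          unfolding restr_def S_def using star_left[of X1 X2 f2 B f1] d z2 Y by auto
      qed
      then show ?thesis using ind1 Y1 by simp
    next
      assume Y2: "Y \<in> X2//r2"
      then have Y: "Y \<subseteq> X2" using quot_sub[OF e2] by blast
      have "restr S Y = restr f2 Y"
      proof
        fix B show "restr S Y B = restr f2 Y B"
          unfolding restr_def S_def using star_right[of X1 X2 f1 B f2] d z1 Y by auto
      qed
      then show ?thesis using ind2 Y2 by simp
    qed
  qed
  have "icP (X1 \<union> X2) S (r1 \<union> r2)" unfolding icP_def using eq dec ind by blast
  then have "r1 \<union> r2 = R0 (X1 \<union> X2) S" using icP_unique[OF fin SB] by blast
  then have "ic (X1 \<union> X2) S = card ((X1 \<union> X2) // (r1 \<union> r2))" using ic_card[OF fin SB] by simp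
  also have "\<dots> = card (X1//r1) + card (X2//r2)" by (rule card_quotient_union[OF fin1 fin2 e1 e2 d])
  also have "\<dots> = ic X1 f1 + ic X2 f2" unfolding r1_def r2_def using ic_card fin1 fin2 f1B f2B by simp
  finally show ?thesis unfolding S_def .
qed



lemma bp_Bool: "f {} = 0 \<Longrightarrow> blockprod X f r \<in> Bool X"
  unfolding Bool_def blockprod_def by auto

lemma bp_dec:
  assumes fin: "finite X" and eq: "equiv X r" and z: "f {} = 0"
  shows "dec X (blockprod X f r) r"
  unfolding dec_def
proof (intro allI impI)
  fix A assume A: "A \<subseteq> X"
  have finQ: "finite (X//r)" using fin eq finite_quotient equiv_type by blast
  have "(\<Sum>Y\<in>X//r. blockprod X f r (A \<inter> Y)) = (\<Sum>Y\<in>X//r. f (A \<inter> Y))"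
  proof (rule sum.cong)
    fix Y assume Y: "Y \<in> X//r"
    have "blockprod X f r (A \<inter> Y) = (\<Sum>Y'\<in>X//r. f (A \<inter> Y \<inter> Y'))"
      unfolding blockprod_def using A by auto
    also have "\<dots> = f (A \<inter> Y \<inter> Y) + (\<Sum>Y'\<in>X//r - {Y}. f (A \<inter> Y \<inter> Y'))"
      using sum.remove[OF finQ Y, of "\<lambda>Y'. f (A \<inter> Y \<inter> Y')"] by simp
    also have "(\<Sum>Y'\<in>X//r - {Y}. f (A \<inter> Y \<inter> Y')) = 0"
    proof (rule sum.neutral, rule ballI)
      fix Y' assume "Y' \<in> X//r - {Y}"
      then have "Y \<inter> Y' = {}" using quotient_disj[OF eq Y, of Y'] by auto
      then have "A \<inter> Y \<inter> Y' = {}" by auto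
      then show "f (A \<inter> Y \<inter> Y') = 0" using z by simp
    qed
    finally show "blockprod X f r (A \<inter> Y) = f (A \<inter> Y)" by simp
  qed simp
  then show "blockprod X f r A = (\<Sum>Y\<in>X//r. blockprod X f r (A \<inter> Y))"
    unfolding blockprod_def using A by simp
qed

lemma cl_le_bp:
  assumes "finite X" "equiv X r" "f {} = 0"
  shows "cl X r \<le> ic X (blockprod X f r)"
  using cl_le_ic[OF assms(1) bp_Bool[of f X r, OF assms(3)] assms(2) bp_dec[of X r f, OF assms]] .

lemma equiv_restrict:
  assumes eq: "equiv X r" and sub: "X1 \<subseteq> X"
  shows "equiv X1 (r \<inter> X1 \<times> X1)"
proof (rule equivI)
  show "r \<inter> X1 \<times> X1 \<subseteq> X1 \<times> X1" by blast
  show "refl_on X1 (r \<inter> X1 \<times> X1)" using eq sub unfolding equiv_def refl_on_def by blast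
  show "sym (r \<inter> X1 \<times> X1)" using eq unfolding equiv_def sym_def by blast
  show "trans (r \<inter> X1 \<times> X1)" using eq unfolding equiv_def trans_def by blast
qed

lemma sep_bp_star:
  assumes fin: "finite (X1 \<union> X2)" and d: "X1 \<inter> X2 = {}" and f1B: "f1 \<in> Bool X1" and f2B: "f2 \<in> Bool X2"
    and eq: "equiv (X1 \<union> X2) r"
  shows "sep (X1 \<union> X2) (blockprod (X1 \<union> X2) (star1 X1 f1 X2 f2) r) X1"
  unfolding sep_def
proof (intro allI impI)
  fix A assume A: "A \<subseteq> X1 \<union> X2"
  define S where "S = star1 X1 f1 X2 f2"
  have z1: "f1 {} = 0" and z2: "f2 {} = 0" using f1B f2B Bool_empty by blast+
  have per: "S (A \<inter> Y) = S (A \<inter> X1 \<inter> Y) + S ((A - X1) \<inter> Y)" if Y: "Y \<in> (X1 \<union> X2) // r" for Y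
  proof -
    have "A \<inter> Y \<subseteq> X1 \<union> X2" using A by blast
    then have a: "S (A \<inter> Y) = f1 (A \<inter> Y \<inter> X1) + f2 (A \<inter> Y \<inter> X2)" unfolding S_def by (rule star_val)
    have b: "S (A \<inter> X1 \<inter> Y) = f1 (A \<inter> X1 \<inter> Y)" unfolding S_def
      using star_left[of X1 X2 f2 "A \<inter> X1 \<inter> Y" f1] d z2 by blast
    have "(A - X1) \<inter> Y \<subseteq> X2" using A by blast
    then have c: "S ((A - X1) \<inter> Y) = f2 ((A - X1) \<inter> Y)" unfolding S_def
      using star_right[of X1 X2 f1 "(A - X1) \<inter> Y" f2] d z1 by blast
    have e: "A \<inter> X1 \<inter> Y = A \<inter> Y \<inter> X1" "(A - X1) \<inter> Y = A \<inter> Y \<inter> X2" using A d by blast+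
    show ?thesis using a b c e by simp
  qed
  have "blockprod (X1 \<union> X2) S r A = (\<Sum>Y\<in>(X1 \<union> X2) // r. S (A \<inter> Y))"
    unfolding blockprod_def using A by simp
  also have "\<dots> = (\<Sum>Y\<in>(X1 \<union> X2) // r. S (A \<inter> X1 \<inter> Y)) + (\<Sum>Y\<in>(X1 \<union> X2) // r. S ((A - X1) \<inter> Y))"
    using per by (simp add: sum.distrib)
  also have "(\<Sum>Y\<in>(X1 \<union> X2) // r. S (A \<inter> X1 \<inter> Y)) = blockprod (X1 \<union> X2) S r (A \<inter> X1)"
    unfolding blockprod_def using A by auto
  also have "(\<Sum>Y\<in>(X1 \<union> X2) // r. S ((A - X1) \<inter> Y)) = blockprod (X1 \<union> X2) S r (A - X1)"
    unfolding blockprod_def using A by auto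
  finally show "blockprod (X1 \<union> X2) (star1 X1 f1 X2 f2) r A =
      blockprod (X1 \<union> X2) (star1 X1 f1 X2 f2) r (A \<inter> X1) + blockprod (X1 \<union> X2) (star1 X1 f1 X2 f2) r (A - X1)"
    unfolding S_def .
qed

lemma bp_star:
  assumes fin1: "finite X1" and fin2: "finite X2" and d: "X1 \<inter> X2 = {}"
    and f1B: "f1 \<in> Bool X1" and f2B: "f2 \<in> Bool X2" and e1: "equiv X1 r1" and e2: "equiv X2 r2"
  shows "blockprod (X1 \<union> X2) (star1 X1 f1 X2 f2) (r1 \<union> r2)
       = star1 X1 (blockprod X1 f1 r1) X2 (blockprod X2 f2 r2)"
proof
  fix A
  define S where "S = star1 X1 f1 X2 f2"
  have z1: "f1 {} = 0" and z2: "f2 {} = 0" using f1B f2B Bool_empty by blast+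
  show "blockprod (X1 \<union> X2) (star1 X1 f1 X2 f2) (r1 \<union> r2) A
       = star1 X1 (blockprod X1 f1 r1) X2 (blockprod X2 f2 r2) A"
  proof (cases "A \<subseteq> X1 \<union> X2")
    case A: True
    have "blockprod (X1 \<union> X2) S (r1 \<union> r2) A = (\<Sum>Y\<in>(X1 \<union> X2) // (r1 \<union> r2). S (A \<inter> Y))"
      unfolding blockprod_def using A by simp
    also have "\<dots> = (\<Sum>Y\<in>X1//r1. S (A \<inter> Y)) + (\<Sum>Y\<in>X2//r2. S (A \<inter> Y))"
      by (rule sum_quotient_union[OF fin1 fin2 e1 e2 d])
    also have "(\<Sum>Y\<in>X1//r1. S (A \<inter> Y)) = (\<Sum>Y\<in>X1//r1. f1 (A \<inter> X1 \<inter> Y))"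
    proof (rule sum.cong)
      fix Y assume "Y \<in> X1//r1"
      then have Y: "Y \<subseteq> X1" using quot_sub[OF e1] by blast
      then have "A \<inter> X1 \<inter> Y = A \<inter> Y" by blast
      moreover have "S (A \<inter> Y) = f1 (A \<inter> Y)" unfolding S_def using star_left[of X1 X2 f2 "A \<inter> Y" f1] d z2 Y by blast
      ultimately show "S (A \<inter> Y) = f1 (A \<inter> X1 \<inter> Y)" by simp
    qed simp
    also have "(\<Sum>Y\<in>X2//r2. S (A \<inter> Y)) = (\<Sum>Y\<in>X2//r2. f2 (A \<inter> X2 \<inter> Y))"
    proof (rule sum.cong)
      fix Y assume "Y \<in> X2//r2"
      then have Y: "Y \<subseteq> X2" using quot_sub[OF e2] by blast
      then have "A \<inter> X2 \<inter> Y = A \<inter> Y" by blast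
      moreover have "S (A \<inter> Y) = f2 (A \<inter> Y)" unfolding S_def using star_right[of X1 X2 f1 "A \<inter> Y" f2] d z1 Y by blast
      ultimately show "S (A \<inter> Y) = f2 (A \<inter> X2 \<inter> Y)" by simp
    qed simp
    also have "(\<Sum>Y\<in>X1//r1. f1 (A \<inter> X1 \<inter> Y)) + (\<Sum>Y\<in>X2//r2. f2 (A \<inter> X2 \<inter> Y))
        = star1 X1 (blockprod X1 f1 r1) X2 (blockprod X2 f2 r2) A"
      unfolding star1_def blockprod_def using A by simp
    finally show ?thesis unfolding S_def .
  next
    case False
    then show ?thesis unfolding blockprod_def star1_def by simp
  qed
qed

lemma EW_star:
  assumes fin1: "finite X1" and fin2: "finite X2" and d: "X1 \<inter> X2 = {}"
    and f1B: "f1 \<in> Bool X1" and f2B: "f2 \<in> Bool X2"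
    and rEW: "r \<in> EW (X1 \<union> X2) (star1 X1 f1 X2 f2)"
  shows "r = (r \<inter> X1 \<times> X1) \<union> (r \<inter> X2 \<times> X2)" "r \<inter> X1 \<times> X1 \<in> EW X1 f1" "r \<inter> X2 \<times> X2 \<in> EW X2 f2"
proof -
  define X where "X = X1 \<union> X2"
  define S where "S = star1 X1 f1 X2 f2"
  define h where "h = blockprod X S r"
  define r1 where "r1 = r \<inter> X1 \<times> X1"
  define r2 where "r2 = r \<inter> X2 \<times> X2"
  have fin: "finite X" unfolding X_def using fin1 fin2 by simp
  have z1: "f1 {} = 0" and z2: "f2 {} = 0" using f1B f2B Bool_empty by blast+
  have SB: "S \<in> Bool X" unfolding S_def X_def by (rule star_Bool[OF f1B f2B])
  have zS: "S {} = 0" using SB Bool_empty by blast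
  have eq: "equiv X r" and cl: "ic X h = cl X r" using rEW unfolding EW_def h_def X_def S_def by auto
  have hB: "h \<in> Bool X" unfolding h_def by (rule bp_Bool[of S X r, OF zS])
  have hdec: "dec X h r" unfolding h_def by (rule bp_dec[of X r S, OF fin eq zS])
  have rR0: "r = R0 X h" using cl_eq_ic[OF fin hB eq hdec] cl by simp
  have sX1: "sep X h X1" unfolding h_def X_def S_def
    using sep_bp_star[OF _ d f1B f2B] fin eq unfolding X_def by blast
  have split: "x \<in> X1 \<longleftrightarrow> y \<in> X1" if "(x, y) \<in> r" for x y
    using R0_D[of x y X h X1] that rR0 sX1 unfolding X_def by blast
  have rt: "r \<subseteq> X \<times> X" using equiv_type[OF eq] .
  show r12: "r = (r \<inter> X1 \<times> X1) \<union> (r \<inter> X2 \<times> X2)"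
  proof
    show "r \<subseteq> (r \<inter> X1 \<times> X1) \<union> (r \<inter> X2 \<times> X2)"
    proof
      fix p assume p: "p \<in> r"
      obtain x y where xy: "p = (x, y)" by (cases p)
      have "x \<in> X" "y \<in> X" using rt p xy by auto
      moreover have "x \<in> X1 \<longleftrightarrow> y \<in> X1" using split p xy by simp
      ultimately show "p \<in> (r \<inter> X1 \<times> X1) \<union> (r \<inter> X2 \<times> X2)" using p xy unfolding X_def by auto
    qed
  qed blast
  have e1: "equiv X1 r1" unfolding r1_def by (rule equiv_restrict[OF eq]) (simp add: X_def)
  have e2: "equiv X2 r2" unfolding r2_def by (rule equiv_restrict[OF eq]) (simp add: X_def)
  have hs: "h = star1 X1 (blockprod X1 f1 r1) X2 (blockprod X2 f2 r2)"
    unfolding h_def X_def S_def using r12 bp_star[OF fin1 fin2 d f1B f2B e1 e2] unfolding r1_def r2_def by simp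
  have b1: "blockprod X1 f1 r1 \<in> Bool X1" by (rule bp_Bool[of f1 X1 r1, OF z1])
  have b2: "blockprod X2 f2 r2 \<in> Bool X2" by (rule bp_Bool[of f2 X2 r2, OF z2])
  have icsum: "ic X h = ic X1 (blockprod X1 f1 r1) + ic X2 (blockprod X2 f2 r2)"
    unfolding hs X_def by (rule ic_star[OF fin1 fin2 d b1 b2])
  have clsum: "cl X r = cl X1 r1 + cl X2 r2"
  proof -
    have "r = r1 \<union> r2" using r12 unfolding r1_def r2_def .
    then show ?thesis unfolding cl_def X_def using card_quotient_union[OF fin1 fin2 e1 e2 d] by simp
  qed
  have le1: "cl X1 r1 \<le> ic X1 (blockprod X1 f1 r1)" by (rule cl_le_bp[of X1 r1 f1, OF fin1 e1 z1])
  have le2: "cl X2 r2 \<le> ic X2 (blockprod X2 f2 r2)" by (rule cl_le_bp[of X2 r2 f2, OF fin2 e2 z2])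
  have "ic X1 (blockprod X1 f1 r1) = cl X1 r1" "ic X2 (blockprod X2 f2 r2) = cl X2 r2"
    using icsum clsum cl le1 le2 by linarith+
  then show "r \<inter> X1 \<times> X1 \<in> EW X1 f1" "r \<inter> X2 \<times> X2 \<in> EW X2 f2"
    using e1 e2 unfolding EW_def r1_def r2_def by auto
qed

lemma finite_qset: "finite X \<Longrightarrow> equiv X r \<Longrightarrow> finite (qset X r)"
  unfolding qset_def by (rule finite_imageI, rule finite_quotient, assumption, erule equiv_type)

lemma quot_Bool: "f {} = 0 \<Longrightarrow> quot X f r \<in> Bool (qset X r)"
  unfolding Bool_def quot_def by simp

lemma varpi_in: "x \<in> X \<Longrightarrow> varpi r x \<in> qset X r"
  unfolding varpi_def qset_def by (rule imageI, rule quotientI)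

lemma qset_union:
  assumes e1: "equiv X1 r1" and e2: "equiv X2 r2" and d: "X1 \<inter> X2 = {}"
  shows "qset (X1 \<union> X2) (r1 \<union> r2) = qset X1 r1 \<union> qset X2 r2"
  unfolding qset_def quotient_union[OF e1 e2 d] by (rule image_Un)

lemma qset_disj:
  assumes fin1: "finite X1" and fin2: "finite X2" and e1: "equiv X1 r1" and e2: "equiv X2 r2" and d: "X1 \<inter> X2 = {}"
  shows "qset X1 r1 \<inter> qset X2 r2 = {}"
proof (rule ccontr)
  assume "qset X1 r1 \<inter> qset X2 r2 \<noteq> {}"
  then obtain C1 C2 where C1: "C1 \<in> X1//r1" and C2: "C2 \<in> X2//r2" and c: "set_encode C1 = set_encode C2"
    unfolding qset_def by blast
  have "finite C1" using finite_equiv_class[OF fin1 equiv_type[OF e1] C1] .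
  moreover have "finite C2" using finite_equiv_class[OF fin2 equiv_type[OF e2] C2] .
  ultimately have "C1 = C2" using c set_encode_eq by blast
  then show False using quotient_union_disj[OF e1 e2 d] C1 C2 by blast
qed

lemma quot_star:
  assumes fin1: "finite X1" and fin2: "finite X2" and d: "X1 \<inter> X2 = {}"
    and e1: "equiv X1 r1" and e2: "equiv X2 r2"
  shows "quot (X1 \<union> X2) (star1 X1 f1 X2 f2) (r1 \<union> r2)
       = star1 (qset X1 r1) (quot X1 f1 r1) (qset X2 r2) (quot X2 f2 r2)"
proof
  fix A
  define X where "X = X1 \<union> X2"
  define r where "r = r1 \<union> r2"
  define Q1 where "Q1 = qset X1 r1"
  define Q2 where "Q2 = qset X2 r2"
  have Q: "qset X r = Q1 \<union> Q2" unfolding X_def r_def Q1_def Q2_def by (rule qset_union[OF e1 e2 d])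
  have v1: "varpi r x = varpi r1 x \<and> varpi r1 x \<in> Q1" if "x \<in> X1" for x
    unfolding r_def varpi_def Q1_def using class_union1[OF e2 d that] varpi_in[OF that, of r1]
    unfolding varpi_def by simp
  have v2: "varpi r x = varpi r2 x \<and> varpi r2 x \<in> Q2" if "x \<in> X2" for x
    unfolding r_def varpi_def Q2_def using class_union2[OF e1 d that] varpi_in[OF that, of r2]
    unfolding varpi_def by simp
  show "quot (X1 \<union> X2) (star1 X1 f1 X2 f2) (r1 \<union> r2) A
       = star1 (qset X1 r1) (quot X1 f1 r1) (qset X2 r2) (quot X2 f2 r2) A"
  proof (cases "A \<subseteq> Q1 \<union> Q2")
    case A: True
    have s: "{x \<in> X. varpi r x \<in> A} \<subseteq> X1 \<union> X2" unfolding X_def by blast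
    have "quot X (star1 X1 f1 X2 f2) r A = star1 X1 f1 X2 f2 {x \<in> X. varpi r x \<in> A}"
      unfolding quot_def using A Q by simp
    also have "\<dots> = f1 ({x \<in> X. varpi r x \<in> A} \<inter> X1) + f2 ({x \<in> X. varpi r x \<in> A} \<inter> X2)"
      by (rule star_val[OF s])
    also have "{x \<in> X. varpi r x \<in> A} \<inter> X1 = {x \<in> X1. varpi r1 x \<in> A \<inter> Q1}"
      unfolding X_def using v1 by auto
    also have "{x \<in> X. varpi r x \<in> A} \<inter> X2 = {x \<in> X2. varpi r2 x \<in> A \<inter> Q2}"
      unfolding X_def using v2 by auto
    also have "f1 {x \<in> X1. varpi r1 x \<in> A \<inter> Q1} + f2 {x \<in> X2. varpi r2 x \<in> A \<inter> Q2}
        = star1 Q1 (quot X1 f1 r1) Q2 (quot X2 f2 r2) A"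
      unfolding star1_def quot_def Q1_def[symmetric] Q2_def[symmetric] using A by simp
    finally show ?thesis unfolding X_def r_def Q1_def Q2_def .
  next
    case False
    then show ?thesis unfolding quot_def star1_def
      using Q unfolding X_def r_def Q1_def Q2_def by simp
  qed
qed



lemma conv1: "convenient B \<Longrightarrow> finite X \<Longrightarrow> B X \<subseteq> Bool X"
  unfolding convenient_def by simp
lemma conv2: "convenient B \<Longrightarrow> finite X \<Longrightarrow> bij_betw \<sigma> X Y \<Longrightarrow> f \<in> B X \<Longrightarrow> transport X \<sigma> Y f \<in> B Y"
  unfolding convenient_def by simp
lemma conv5: "convenient B \<Longrightarrow> finite X \<Longrightarrow> Y \<subseteq> X \<Longrightarrow> f \<in> B X \<Longrightarrow> restr f Y \<in> B Y"
  unfolding convenient_def by simp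
lemma conv6: "convenient B \<Longrightarrow> finite X \<Longrightarrow> f \<in> B X \<Longrightarrow> r \<in> EW X f \<Longrightarrow> quot X f r \<in> B (qset X r)"
  unfolding convenient_def by simp
lemma conv7: "convenient B \<Longrightarrow> finite X \<Longrightarrow> f \<in> B X \<Longrightarrow> EW X f = ES X f"
  unfolding convenient_def by simp

inductive G :: "nat set \<Rightarrow> bfun \<Rightarrow> bool" where
  G_base: "convenient Bt \<Longrightarrow> finite X \<Longrightarrow> f \<in> Bt X \<Longrightarrow> G X f"
| G_zero: "G {} (\<lambda>_. 0)"
| G_star: "G X1 f1 \<Longrightarrow> G X2 f2 \<Longrightarrow> X1 \<inter> X2 = {} \<Longrightarrow> G (X1 \<union> X2) (star1 X1 f1 X2 f2)"

lemma G_fin_Bool: "G X f \<Longrightarrow> finite X \<and> f \<in> Bool X"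
proof (induction rule: G.induct)
  case (G_base Bt X f)
  then show ?case using conv1 by blast
next
  case G_zero
  then show ?case unfolding Bool_def by simp
next
  case (G_star X1 f1 X2 f2)
  then show ?case using star_Bool by blast
qed

lemma zero_quot: "equiv {} r \<Longrightarrow> qset {} r = {} \<and> quot {} (\<lambda>_. 0) r = (\<lambda>_. 0)"
  unfolding qset_def quot_def by simp

lemma G_EW: "G X f \<Longrightarrow> EW X f = ES X f \<and> (\<forall>r\<in>EW X f. G (qset X r) (quot X f r))"
proof (induction rule: G.induct)
  case (G_base Bt X f)
  have 1: "EW X f = ES X f" using conv7[OF G_base(1-3)] .
  have "G (qset X r) (quot X f r)" if r: "r \<in> EW X f" for r
  proof (rule G.G_base[OF G_base(1)])
    show "finite (qset X r)" using finite_qset G_base(2) r unfolding EW_def by blast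
    show "quot X f r \<in> Bt (qset X r)" using conv6[OF G_base(1-3) r] .
  qed
  then show ?case using 1 by blast
next
  case G_zero
  have q: "qset {} r = {} \<and> quot {} (\<lambda>_. 0) r = (\<lambda>_. 0)" if "r \<in> EW {} (\<lambda>_. 0)" for r
    using zero_quot that unfolding EW_def by blast
  have "EW {} (\<lambda>_. 0) \<subseteq> ES {} (\<lambda>_. 0)"
  proof
    fix r assume r: "r \<in> EW {} (\<lambda>_. 0)"
    then show "r \<in> ES {} (\<lambda>_. 0)" unfolding ES_def using q[OF r] by simp
  qed
  moreover have "ES {} (\<lambda>_. 0) \<subseteq> EW {} (\<lambda>_. 0)" unfolding ES_def by blast
  moreover have "\<forall>r\<in>EW {} (\<lambda>_. 0). G (qset {} r) (quot {} (\<lambda>_. 0) r)"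
    using q G.G_zero by simp
  ultimately show ?case by blast
next
  case (G_star X1 f1 X2 f2)
  have fb1: "finite X1" "f1 \<in> Bool X1" using G_fin_Bool[OF G_star(1)] by auto
  have fb2: "finite X2" "f2 \<in> Bool X2" using G_fin_Bool[OF G_star(2)] by auto
  have d: "X1 \<inter> X2 = {}" by fact
  have z1: "f1 {} = 0" and z2: "f2 {} = 0" using fb1 fb2 Bool_empty by blast+
  define S where "S = star1 X1 f1 X2 f2"
  have main: "G (qset (X1 \<union> X2) r) (quot (X1 \<union> X2) S r) \<and> r \<in> ES (X1 \<union> X2) S"
    if rEW: "r \<in> EW (X1 \<union> X2) S" for r
  proof -
    define r1 where "r1 = r \<inter> X1 \<times> X1"
    define r2 where "r2 = r \<inter> X2 \<times> X2"
    have r12: "r = r1 \<union> r2" and EW1: "r1 \<in> EW X1 f1" and EW2: "r2 \<in> EW X2 f2"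
      using EW_star[OF fb1(1) fb2(1) d fb1(2) fb2(2)] rEW unfolding S_def r1_def r2_def by blast+
    have e1: "equiv X1 r1" and e2: "equiv X2 r2" using EW1 EW2 unfolding EW_def by auto
    define Q1 where "Q1 = qset X1 r1"
    define Q2 where "Q2 = qset X2 r2"
    define q1 where "q1 = quot X1 f1 r1"
    define q2 where "q2 = quot X2 f2 r2"
    have qs: "quot (X1 \<union> X2) S r = star1 Q1 q1 Q2 q2"
      unfolding S_def r12 Q1_def Q2_def q1_def q2_def by (rule quot_star[OF fb1(1) fb2(1) d e1 e2])
    have Qs: "qset (X1 \<union> X2) r = Q1 \<union> Q2"
      unfolding r12 Q1_def Q2_def by (rule qset_union[OF e1 e2 d])
    have Qd: "Q1 \<inter> Q2 = {}" unfolding Q1_def Q2_def by (rule qset_disj[OF fb1(1) fb2(1) e1 e2 d])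
    have G1: "G Q1 q1" using G_star(4) EW1 unfolding Q1_def q1_def by blast
    have G2: "G Q2 q2" using G_star(5) EW2 unfolding Q2_def q2_def by blast
    have Gq: "G (qset (X1 \<union> X2) r) (quot (X1 \<union> X2) S r)"
      unfolding qs Qs by (rule G.G_star[OF G1 G2 Qd])
    have ES1: "ic Q1 q1 = ic X1 f1" using G_star(4) EW1 unfolding ES_def Q1_def q1_def by blast
    have ES2: "ic Q2 q2 = ic X2 f2" using G_star(5) EW2 unfolding ES_def Q2_def q2_def by blast
    have fQ1: "finite Q1" unfolding Q1_def by (rule finite_qset[OF fb1(1) e1])
    have fQ2: "finite Q2" unfolding Q2_def by (rule finite_qset[OF fb2(1) e2])
    have qB1: "q1 \<in> Bool Q1" unfolding q1_def Q1_def by (rule quot_Bool[of f1 X1 r1, OF z1])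
    have qB2: "q2 \<in> Bool Q2" unfolding q2_def Q2_def by (rule quot_Bool[of f2 X2 r2, OF z2])
    have "ic (qset (X1 \<union> X2) r) (quot (X1 \<union> X2) S r) = ic Q1 q1 + ic Q2 q2"
      unfolding qs Qs by (rule ic_star[OF fQ1 fQ2 Qd qB1 qB2])
    also have "\<dots> = ic X1 f1 + ic X2 f2" using ES1 ES2 by simp
    also have "\<dots> = ic (X1 \<union> X2) S" unfolding S_def
      by (rule ic_star[OF fb1(1) fb2(1) d fb1(2) fb2(2), symmetric])
    finally have "r \<in> ES (X1 \<union> X2) S" unfolding ES_def using rEW by blast
    then show ?thesis using Gq by blast
  qed
  have "EW (X1 \<union> X2) S = ES (X1 \<union> X2) S"
  proof
    show "EW (X1 \<union> X2) S \<subseteq> ES (X1 \<union> X2) S" using main by blast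
    show "ES (X1 \<union> X2) S \<subseteq> EW (X1 \<union> X2) S" unfolding ES_def by blast
  qed
  then show ?case using main unfolding S_def by blast
qed

lemma restr_star:
  assumes "Y \<subseteq> X1 \<union> X2"
  shows "restr (star1 X1 f1 X2 f2) Y = star1 (Y \<inter> X1) (restr f1 (Y \<inter> X1)) (Y \<inter> X2) (restr f2 (Y \<inter> X2))"
proof
  fix B
  have U: "(Y \<inter> X1) \<union> (Y \<inter> X2) = Y" using assms by blast
  show "restr (star1 X1 f1 X2 f2) Y B = star1 (Y \<inter> X1) (restr f1 (Y \<inter> X1)) (Y \<inter> X2) (restr f2 (Y \<inter> X2)) B"
  proof (cases "B \<subseteq> Y")
    case True
    have e: "B \<inter> (Y \<inter> X1) = B \<inter> X1" "B \<inter> (Y \<inter> X2) = B \<inter> X2" using True by blast+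
    have e2: "B \<inter> X1 \<subseteq> Y" "B \<inter> X2 \<subseteq> Y" using True by blast+
    have s: "B \<subseteq> X1 \<union> X2" using True assms by blast
    show ?thesis unfolding restr_def star1_def U using True s e e2 by simp
  next
    case False
    then show ?thesis unfolding restr_def star1_def U by simp
  qed
qed

lemma G_restr: "G X f \<Longrightarrow> Y \<subseteq> X \<Longrightarrow> G Y (restr f Y)"
proof (induction arbitrary: Y rule: G.induct)
  case (G_base Bt X f)
  show ?case
  proof (rule G.G_base[OF G_base(1)])
    show "finite Y" using G_base finite_subset by blast
    show "restr f Y \<in> Bt Y" using conv5[OF G_base(1,2) G_base(4) G_base(3)] .
  qed
next
  case G_zero
  then have "Y = {}" by blast
  moreover have "restr (\<lambda>_. 0) {} = (\<lambda>_. 0)" unfolding restr_def by simp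
  ultimately show ?case using G.G_zero by simp
next
  case (G_star X1 f1 X2 f2)
  have "G (Y \<inter> X1 \<union> Y \<inter> X2) (star1 (Y \<inter> X1) (restr f1 (Y \<inter> X1)) (Y \<inter> X2) (restr f2 (Y \<inter> X2)))"
  proof (rule G.G_star)
    show "G (Y \<inter> X1) (restr f1 (Y \<inter> X1))" using G_star(4) by blast
    show "G (Y \<inter> X2) (restr f2 (Y \<inter> X2))" using G_star(5) by blast
    show "Y \<inter> X1 \<inter> (Y \<inter> X2) = {}" using G_star(3) by blast
  qed
  moreover have "Y \<inter> X1 \<union> Y \<inter> X2 = Y" using G_star(6) by blast
  ultimately show ?case using restr_star[OF G_star(6)] by simp
qed

lemma transport_star:
  "transport (X1 \<union> X2) \<sigma> (\<sigma> ` X1 \<union> \<sigma> ` X2) (star1 X1 f1 X2 f2)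
   = star1 (\<sigma> ` X1) (transport X1 \<sigma> (\<sigma> ` X1) f1) (\<sigma> ` X2) (transport X2 \<sigma> (\<sigma> ` X2) f2)"
proof
  fix B
  show "transport (X1 \<union> X2) \<sigma> (\<sigma> ` X1 \<union> \<sigma> ` X2) (star1 X1 f1 X2 f2) B
   = star1 (\<sigma> ` X1) (transport X1 \<sigma> (\<sigma> ` X1) f1) (\<sigma> ` X2) (transport X2 \<sigma> (\<sigma> ` X2) f2) B"
  proof (cases "B \<subseteq> \<sigma> ` X1 \<union> \<sigma> ` X2")
    case True
    have s: "{x \<in> X1 \<union> X2. \<sigma> x \<in> B} \<subseteq> X1 \<union> X2" by blast
    have e1: "{x \<in> X1 \<union> X2. \<sigma> x \<in> B} \<inter> X1 = {x \<in> X1. \<sigma> x \<in> B \<inter> \<sigma> ` X1}" by blast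
    have e2: "{x \<in> X1 \<union> X2. \<sigma> x \<in> B} \<inter> X2 = {x \<in> X2. \<sigma> x \<in> B \<inter> \<sigma> ` X2}" by blast
    have "transport (X1 \<union> X2) \<sigma> (\<sigma> ` X1 \<union> \<sigma> ` X2) (star1 X1 f1 X2 f2) B
        = star1 X1 f1 X2 f2 {x \<in> X1 \<union> X2. \<sigma> x \<in> B}" unfolding transport_def using True by simp
    also have "\<dots> = f1 {x \<in> X1. \<sigma> x \<in> B \<inter> \<sigma> ` X1} + f2 {x \<in> X2. \<sigma> x \<in> B \<inter> \<sigma> ` X2}"
      using star_val[OF s] e1 e2 by simp
    also have "\<dots> = star1 (\<sigma> ` X1) (transport X1 \<sigma> (\<sigma> ` X1) f1) (\<sigma> ` X2) (transport X2 \<sigma> (\<sigma> ` X2) f2) B"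
      unfolding star1_def transport_def using True by simp
    finally show ?thesis .
  next
    case False
    then show ?thesis unfolding transport_def star1_def by simp
  qed
qed

lemma G_transport: "G X f \<Longrightarrow> bij_betw \<sigma> X Y \<Longrightarrow> G Y (transport X \<sigma> Y f)"
proof (induction arbitrary: \<sigma> Y rule: G.induct)
  case (G_base Bt X f)
  show ?case
  proof (rule G.G_base[OF G_base(1)])
    show "finite Y" using G_base bij_betw_finite by blast
    show "transport X \<sigma> Y f \<in> Bt Y" using conv2[OF G_base(1,2) G_base(4) G_base(3)] .
  qed
next
  case G_zero
  then have "Y = {}" unfolding bij_betw_def by simp
  moreover have "transport {} \<sigma> {} (\<lambda>_. 0) = (\<lambda>_. 0)" unfolding transport_def by simp
  ultimately show ?case using G.G_zero by simp
next
  case (G_star X1 f1 X2 f2)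
  have bij: "bij_betw \<sigma> (X1 \<union> X2) Y" by fact
  have Y: "Y = \<sigma> ` X1 \<union> \<sigma> ` X2" using bij unfolding bij_betw_def by auto
  have inj: "inj_on \<sigma> (X1 \<union> X2)" using bij unfolding bij_betw_def by blast
  have b1: "bij_betw \<sigma> X1 (\<sigma> ` X1)" using inj unfolding bij_betw_def by (blast intro: inj_on_subset)
  have b2: "bij_betw \<sigma> X2 (\<sigma> ` X2)" using inj unfolding bij_betw_def by (blast intro: inj_on_subset)
  have d: "\<sigma> ` X1 \<inter> \<sigma> ` X2 = {}"
  proof -
    have "\<sigma> ` X1 \<inter> \<sigma> ` X2 = \<sigma> ` (X1 \<inter> X2)"
      using inj_on_image_Int[OF inj, of X1 X2] by blast
    then show ?thesis using G_star(3) by simp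
  qed
  have "G (\<sigma> ` X1 \<union> \<sigma> ` X2) (star1 (\<sigma> ` X1) (transport X1 \<sigma> (\<sigma> ` X1) f1) (\<sigma> ` X2) (transport X2 \<sigma> (\<sigma> ` X2) f2))"
    by (rule G.G_star[OF G_star(4)[OF b1] G_star(5)[OF b2] d])
  then show ?case unfolding Y transport_star[symmetric] .
qed

theorem proposition3p24:
  shows "\<exists>Bmax. convenient Bmax \<and>
           (\<forall>Bt. convenient Bt \<longrightarrow> (\<forall>X. finite X \<longrightarrow> Bt X \<subseteq> Bmax X))"
proof (intro exI conjI)
  define Bm where "Bm = (\<lambda>X. {f. G X f})"
  show "convenient (\<lambda>X. {f. G X f})"
    unfolding convenient_def
  proof (intro conjI allI impI)
    show "\<And>X. finite X \<Longrightarrow> {f. G X f} \<subseteq> Bool X" using G_fin_Bool by blast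
    show "\<And>X Y \<sigma> f. finite X \<Longrightarrow> bij_betw \<sigma> X Y \<Longrightarrow> f \<in> {f. G X f} \<Longrightarrow> transport X \<sigma> Y f \<in> {f. G Y f}"
      using G_transport by blast
    show "(\<lambda>_. 0) \<in> {f. G {} f}" using G.G_zero by simp
    show "\<And>X Y f g. finite X \<Longrightarrow> finite Y \<Longrightarrow> X \<inter> Y = {} \<Longrightarrow> f \<in> {f. G X f} \<Longrightarrow> g \<in> {f. G Y f}
        \<Longrightarrow> star1 X f Y g \<in> {f. G (X \<union> Y) f}" using G.G_star by blast
    show "\<And>X Y f. finite X \<Longrightarrow> Y \<subseteq> X \<Longrightarrow> f \<in> {f. G X f} \<Longrightarrow> restr f Y \<in> {f. G Y f}"
      using G_restr by blast
    show "\<And>X f r. finite X \<Longrightarrow> f \<in> {f. G X f} \<Longrightarrow> r \<in> EW X f \<Longrightarrow> quot X f r \<in> {f. G (qset X r) f}"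
      using G_EW by blast
    show "\<And>X f. finite X \<Longrightarrow> f \<in> {f. G X f} \<Longrightarrow> EW X f = ES X f"
      using G_EW by blast
  qed
  show "\<forall>Bt. convenient Bt \<longrightarrow> (\<forall>X. finite X \<longrightarrow> Bt X \<subseteq> {f. G X f})"
    using G.G_base by blast
qed

end
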